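(* Let $X\in\mathbb{R}^{n\times d}$ with rows $x_1,\dots,x_n$ and let $w\in\mathbb{R}^n$ with $w_i\in\{v_1,\dots,v_t\}$ for all $i\in[n]$, where $v_1,\dots,v_t>0$. The range space induced by $\mathcal{F}_{\log}=\{\beta\mapsto w_i\cdot g(x_i\beta)\mid i\in[n]\}$ has VC dimension at most $t(d+1)$.
   Context: $g(z)=\ln(1+e^z)$. For a finite set $\mathcal{F}$ of functions $\mathbb{R}^d\to\mathbb{R}_{\ge0}$, for $\beta\in\mathbb{R}^d$ and $r\ge 0$ let $\mathrm{range}_{\mathcal{F}}(\beta,r)=\{f\in\mathcal{F}\mid f(\beta)\ge r\}$, and let $\mathrm{ranges}(\mathcal{F})=\{\mathrm{range}_{\mathcal{F}}(\beta,r)\mid\beta\in\mathbb{R}^d,r\ge 0\}$; the range space induced by $\mathcal{F}$ is $(\mathcal{F},\mathrm{ranges}(\mathcal{F}))$. Its VC dimension is the largest size of a subset $G\subseteq\mathcal{F}$ that is shattered, i.e. $|\{G\cap R\mid R\in\mathrm{ranges}(\mathcal{F})\}|=2^{|G|}$. *)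

theory Defs
  imports "HOL-Analysis.Analysis"
begin

definition g :: "real \<Rightarrow> real" where
  "g z = ln (1 + exp z)"

definition range_F :: "('a \<Rightarrow> real) set \<Rightarrow> 'a \<Rightarrow> real \<Rightarrow> ('a \<Rightarrow> real) set" where
  "range_F F \<beta> r = {f \<in> F. f \<beta> \<ge> r}"

definition ranges :: "('a \<Rightarrow> real) set \<Rightarrow> ('a \<Rightarrow> real) set set" where
  "ranges F = {range_F F \<beta> r | \<beta> r. r \<ge> 0}"

definition shattered :: "('a \<Rightarrow> real) set \<Rightarrow> ('a \<Rightarrow> real) set \<Rightarrow> bool" where
  "shattered F G \<longleftrightarrow> card {G \<inter> R | R. R \<in> ranges F} = 2 ^ card G"

definition vc_dim :: "('a \<Rightarrow> real) set \<Rightarrow> nat" where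
  "vc_dim F = Max {card G | G. G \<subseteq> F \<and> shattered F G}"

end

theory Submission
  imports Defs
begin

lemma core:
  fixes S :: "'a::euclidean_space set"
  assumes fin: "finite S" and cS: "card S \<ge> DIM('a) + 2"
  shows "\<exists>P\<subseteq>S. \<forall>\<beta> (Q::real\<Rightarrow>bool). (\<forall>a b. Q a \<and> \<not> Q b \<longrightarrow> b < a) \<longrightarrow>
            \<not> (\<forall>y\<in>S. (y \<in> P \<longleftrightarrow> Q (y \<bullet> \<beta>)))"
proof -
  have "affine_dependent S" using affine_dependent_biggerset[OF fin cS] .
  then obtain U where U0: "sum U S = 0" and Unz: "\<exists>v\<in>S. U v \<noteq> 0"
    and UV: "sum (\<lambda>v. U v *\<^sub>R v) S = 0"
    using affine_dependent_explicit_finite[OF fin] by blast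
  define P where "P = {y\<in>S. U y > 0}"
  define N where "N = S - P"
  have PS: "P \<subseteq> S" unfolding P_def by auto
  have finP: "finite P" using PS fin finite_subset by blast
  have finN: "finite N" using fin unfolding N_def by auto
  have Pne: "P \<noteq> {}"
  proof
    assume "P = {}"
    then have le: "\<forall>y\<in>S. U y \<le> 0" unfolding P_def by auto
    have "sum (\<lambda>y. - U y) S = 0" using U0 by (simp add: sum_negf)
    then have "\<forall>y\<in>S. - U y = 0" using sum_nonneg_eq_0_iff[OF fin, of "\<lambda>y. - U y"] le by auto
    then have "\<forall>y\<in>S. U y = 0" by simp
    with Unz show False by blast
  qed
  have splitU: "sum U S = sum U P + sum U N"
    unfolding N_def using sum.subset_diff[OF PS fin] by (simp add: add.commute)
  have posP: "sum U P > 0"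
    using sum_pos[OF finP Pne] unfolding P_def by auto
  have negN: "\<exists>y\<in>N. U y < 0"
  proof (rule ccontr)
    assume "\<not> ?thesis"
    then have "sum U N \<ge> 0" by (intro sum_nonneg) (auto simp: not_less)
    with posP splitU U0 show False by linarith
  qed
  show ?thesis
  proof (intro exI[of _ P] conjI PS allI impI notI)
    fix \<beta> Q
    assume mono: "\<forall>a b. Q a \<and> \<not> Q b \<longrightarrow> b < a"
      and eq: "\<forall>y\<in>S. (y \<in> P \<longleftrightarrow> Q (y \<bullet> \<beta>))"
    define s where "s y = y \<bullet> \<beta>" for y
    have sum0: "(\<Sum>y\<in>S. U y * s y) = 0"
    proof -
      have "(\<Sum>y\<in>S. U y * s y) = (sum (\<lambda>v. U v *\<^sub>R v) S) \<bullet> \<beta>"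
        unfolding s_def by (simp add: inner_sum_left)
      then show ?thesis using UV by simp
    qed
    define c where "c = Min (s ` P)"
    have cP: "\<forall>y\<in>P. c \<le> s y" unfolding c_def using finP by auto
    obtain p where pP: "p \<in> P" and cp: "c = s p"
    proof -
      have "c \<in> s ` P" unfolding c_def using Min_in[of "s ` P"] finP Pne by auto
      then show ?thesis using that by blast
    qed
    have cN: "\<forall>y\<in>N. s y < c"
    proof
      fix y assume "y \<in> N"
      then have "y \<in> S" "y \<notin> P" unfolding N_def by auto
      then have "\<not> Q (s y)" using eq unfolding s_def by auto
      moreover have "Q (s p)" using eq pP PS unfolding s_def by auto
      ultimately show "s y < c" using mono cp by blast
    qed
    have A: "(\<Sum>y\<in>P. U y * s y) \<ge> (\<Sum>y\<in>P. U y * c)"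
      by (intro sum_mono) (use cP in \<open>auto simp: P_def intro: mult_left_mono\<close>)
    have B: "(\<Sum>y\<in>N. U y * s y) > (\<Sum>y\<in>N. U y * c)"
    proof (rule sum_strict_mono_ex1[OF finN])
      show "\<forall>y\<in>N. U y * c \<le> U y * s y"
      proof
        fix y assume y: "y \<in> N"
        then have "U y \<le> 0" unfolding N_def P_def by auto
        then show "U y * c \<le> U y * s y" using cN y by (intro mult_left_mono_neg) auto
      qed
      show "\<exists>y\<in>N. U y * c < U y * s y"
        using negN cN by (auto intro: mult_strict_left_mono_neg)
    qed
    have "(\<Sum>y\<in>S. U y * s y) = (\<Sum>y\<in>P. U y * s y) + (\<Sum>y\<in>N. U y * s y)"
      unfolding N_def using sum.subset_diff[OF PS fin] by (simp add: add.commute)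
    moreover have "(\<Sum>y\<in>P. U y * c) + (\<Sum>y\<in>N. U y * c) = 0"
    proof -
      have "(\<Sum>y\<in>P. U y * c) + (\<Sum>y\<in>N. U y * c) = c * (sum U P + sum U N)"
        by (simp add: sum_distrib_left distrib_left mult.commute)
      then show ?thesis using splitU U0 by simp
    qed
    ultimately show False using A B sum0 U0 by linarith
  qed
qed

lemma g_mono: "a \<le> b \<Longrightarrow> g a \<le> g b"
  unfolding g_def by (simp add: add_pos_pos)

theorem lemma6:
  fixes x :: "nat \<Rightarrow> real ^ 'd" and w :: "nat \<Rightarrow> real" and v :: "nat \<Rightarrow> real"
    and n t :: nat
  assumes "\<forall>j<t. v j > 0"
    and "\<forall>i<n. \<exists>j<t. w i = v j"
  shows "vc_dim ((\<lambda>i. \<lambda>\<beta>. w i * g (x i \<bullet> \<beta>)) ` {..<n}) \<le> t * (CARD('d) + 1)"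
proof -
  define F where "F = (\<lambda>i. \<lambda>\<beta>. w i * g (x i \<bullet> \<beta>)) ` {..<n}"
  have finF: "finite F" unfolding F_def by simp
  define ix where "ix f = (SOME i. i < n \<and> f = (\<lambda>\<beta>. w i * g (x i \<bullet> \<beta>)))" for f
  define jx where "jx f = (SOME j. j < t \<and> w (ix f) = v j)" for f
  have ixp: "ix f < n \<and> f = (\<lambda>\<beta>. w (ix f) * g (x (ix f) \<bullet> \<beta>))" if "f \<in> F" for f
  proof -
    have "\<exists>i. i < n \<and> f = (\<lambda>\<beta>. w i * g (x i \<bullet> \<beta>))" using that unfolding F_def by auto
    then show ?thesis unfolding ix_def by (rule someI_ex)
  qed
  have jxp: "jx f < t \<and> w (ix f) = v (jx f)" if "f \<in> F" for f
  proof -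
    have "\<exists>j. j < t \<and> w (ix f) = v j" using assms(2) ixp[OF that] by auto
    then show ?thesis unfolding jx_def by (rule someI_ex)
  qed
  have fform: "f = (\<lambda>\<beta>. v (jx f) * g (x (ix f) \<bullet> \<beta>))" if "f \<in> F" for f
    using ixp[OF that] jxp[OF that] by metis
  have bound: "card G \<le> t * (CARD('d) + 1)" if GF: "G \<subseteq> F" and sh: "shattered F G" for G
  proof -
    have finG: "finite G" using GF finF finite_subset by blast
    have alltr: "\<exists>\<beta> r. G \<inter> range_F F \<beta> r = H" if HG: "H \<subseteq> G" for H
    proof -
      define T where "T = {G \<inter> R | R. R \<in> ranges F}"
      have TP: "T \<subseteq> Pow G" unfolding T_def by auto
      have "card T = card (Pow G)" using sh unfolding shattered_def T_def
        by (simp add: card_Pow finG)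
      then have "T = Pow G" using card_subset_eq[OF _ TP] finG by simp
      then have "H \<in> T" using HG by auto
      then show ?thesis unfolding T_def ranges_def by auto
    qed
    define Gj where "Gj j = {f\<in>G. jx f = j}" for j
    have cardGj: "card (Gj j) \<le> CARD('d) + 1" if jt: "j < t" for j
    proof (rule ccontr)
      assume "\<not> ?thesis"
      then have big: "card (Gj j) \<ge> CARD('d) + 2" by simp
      define X where "X = (\<lambda>f. x (ix f)) ` Gj j"
      have GjF: "Gj j \<subseteq> F" using GF unfolding Gj_def by auto
      have finGj: "finite (Gj j)" using finG unfolding Gj_def by auto
      have inj: "inj_on (\<lambda>f. x (ix f)) (Gj j)"
      proof (rule inj_onI)
        fix f f' assume f: "f \<in> Gj j" and f': "f' \<in> Gj j" and e: "x (ix f) = x (ix f')"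
        have "f = (\<lambda>\<beta>. v j * g (x (ix f) \<bullet> \<beta>))" using fform[of f] f GjF unfolding Gj_def by auto
        moreover have "f' = (\<lambda>\<beta>. v j * g (x (ix f') \<bullet> \<beta>))" using fform[of f'] f' GjF unfolding Gj_def by auto
        ultimately show "f = f'" using e by simp
      qed
      have cX: "card X = card (Gj j)" unfolding X_def using card_image[OF inj] .
      have finX: "finite X" unfolding X_def using finGj by simp
      have "card X \<ge> DIM(real ^ 'd) + 2" using cX big by simp
      from core[OF finX this] obtain P where PX: "P \<subseteq> X" and
        noP: "\<forall>\<beta> (Q::real\<Rightarrow>bool). (\<forall>a b. Q a \<and> \<not> Q b \<longrightarrow> b < a) \<longrightarrow>
            \<not> (\<forall>y\<in>X. (y \<in> P \<longleftrightarrow> Q (y \<bullet> \<beta>)))" by (elim exE conjE)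
      define H where "H = {f\<in>Gj j. x (ix f) \<in> P}"
      have "H \<subseteq> G" unfolding H_def Gj_def by auto
      then obtain \<beta> r where tr: "G \<inter> range_F F \<beta> r = H" using alltr by blast
      have vpos: "v j > 0" using assms(1) jt by auto
      have mono: "\<forall>a b. r \<le> v j * g a \<and> \<not> r \<le> v j * g b \<longrightarrow> b < a"
      proof (intro allI impI)
        fix a b assume h: "r \<le> v j * g a \<and> \<not> r \<le> v j * g b"
        show "b < a"
        proof (rule ccontr)
          assume "\<not> b < a"
          then have "g a \<le> g b" using g_mono by simp
          then have "v j * g a \<le> v j * g b" using vpos by simp
          with h show False by linarith
        qed
      qed
      have "\<forall>y\<in>X. (y \<in> P \<longleftrightarrow> r \<le> v j * g (y \<bullet> \<beta>))"
      proof
        fix y assume "y \<in> X"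
        then obtain f where f: "f \<in> Gj j" and y: "y = x (ix f)" unfolding X_def by auto
        have fF: "f \<in> F" and fG: "f \<in> G" using f GjF unfolding Gj_def by auto
        have fb: "f \<beta> = v j * g (y \<bullet> \<beta>)"
          using fform[OF fF] f y unfolding Gj_def by (metis (mono_tags, lifting) mem_Collect_eq)
        have "y \<in> P \<longleftrightarrow> f \<in> H" unfolding H_def using f y by auto
        also have "\<dots> \<longleftrightarrow> f \<in> range_F F \<beta> r" using tr fG by auto
        also have "\<dots> \<longleftrightarrow> r \<le> v j * g (y \<bullet> \<beta>)" unfolding range_F_def using fF fb by auto
        finally show "y \<in> P \<longleftrightarrow> r \<le> v j * g (y \<bullet> \<beta>)" .
      qed
      moreover have "\<not> (\<forall>y\<in>X. (y \<in> P \<longleftrightarrow> (\<lambda>a. r \<le> v j * g a) (y \<bullet> \<beta>)))"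
        using mp[OF spec[OF spec[OF noP, of \<beta>], of "\<lambda>a. r \<le> v j * g a"] mono] .
      ultimately show False by simp
    qed
    have "G \<subseteq> (\<Union>j<t. Gj j)" unfolding Gj_def using jxp GF by auto
    then have "card G \<le> card (\<Union>j<t. Gj j)"
      by (rule card_mono[rotated]) (use finG in \<open>auto simp: Gj_def\<close>)
    also have "\<dots> \<le> (\<Sum>j<t. card (Gj j))" by (rule card_UN_le) simp
    also have "\<dots> \<le> (\<Sum>j<t. CARD('d) + 1)" by (rule sum_mono) (use cardGj in auto)
    also have "\<dots> = t * (CARD('d) + 1)" by simp
    finally show ?thesis .
  qed
  define A where "A = {card G | G. G \<subseteq> F \<and> shattered F G}"
  have finA: "finite A"
  proof (rule finite_subset)
    show "A \<subseteq> {..card F}" unfolding A_def using card_mono[OF finF] by auto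
  qed simp
  have "shattered F {}"
  proof -
    have "range_F F 0 0 \<in> ranges F" unfolding ranges_def by auto
    then have "{{} \<inter> R | R. R \<in> ranges F} = {{}}" by auto
    then show ?thesis unfolding shattered_def by simp
  qed
  then have "0 \<in> A" unfolding A_def by force
  then have "Max A \<le> t * (CARD('d) + 1)"
    using finA bound unfolding A_def by (subst Max_le_iff) auto
  then show ?thesis unfolding vc_dim_def A_def F_def .
qed

end
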